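(* Let $k\ge 1$. Let $G'$ be the instance with a single offline vertex $j$ and two online types, both adjacent only to $j$: - a type of arrival rate $1-\ln 2$ with edge weight $k$ (the "first-class" type); - a type of arrival rate $2\ln 2$ with edge weight $1$ (the "second-class" type). For $t_1\in[0,1]$, let Algorithm 1$(t_1)$ be the online algorithm that: - matches an arriving first-class vertex to $j$ whenever $j$ is unmatched; - matches a second-class vertex arriving at time $t$ to $j$ whenever $j$ is unmatched and $t>t_1$. Then there exists $t_1\in[0,1]$ such that Algorithm 1$(t_1)$ is an optimal online algorithm on $G'$, i.e. it maximizes the expected total matched weight among all online algorithms.
   Context: Edge-weighted online stochastic matching in the Poisson arrival model. Each online type $i$ independently arrives according to a Poisson process of rate $\lambda_i$ on the time horizon $[0,1]$. The online algorithm knows the instance in advance. On each arrival, it must immediately and irrevocably either match the arriving vertex to an unmatched offline neighbor, gaining the edge weight, or discard it. Each offline vertex is matched at most once. The objective is the expected total matched weight. *)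

theory Defs
  imports "HOL-Probability.Probability"
begin

text \<open>Instance G': one offline vertex j, two online types encoded as bool:
  True = first-class type (rate 1 - ln 2, weight k),
  False = second-class type (rate 2 ln 2, weight 1).\<close>

definition rate :: "bool \<Rightarrow> real" where
  "rate c = (if c then 1 - ln 2 else 2 * ln 2)"

definition wt :: "real \<Rightarrow> bool \<Rightarrow> real" where
  "wt k c = (if c then k else 1)"

text \<open>A realisation of the (marked) Poisson arrival process with n arrivals is given by
  arrival times t 0 < t 1 < ... < t (n-1) in (0,1) and types c 0, ..., c (n-1).
  The history seen at the arrival of the (m-1)-th vertex is the list of the first m arrivals.\<close>

definition hist :: "(nat \<Rightarrow> real) \<Rightarrow> (nat \<Rightarrow> bool) \<Rightarrow> nat \<Rightarrow> (real \<times> bool) list" where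
  "hist t c m = map (\<lambda>i. (t i, c i)) [0..<m]"

definition ordered_times :: "nat \<Rightarrow> (nat \<Rightarrow> real) \<Rightarrow> bool" where
  "ordered_times n t \<longleftrightarrow> (\<forall>i<n. 0 < t i \<and> t i < 1) \<and> (\<forall>i. Suc i < n \<longrightarrow> t i < t (Suc i))"

text \<open>A (possibly randomised) online algorithm: given the history of arrivals up to and
  including the current one (last list element), it returns the probability of matching the
  current arrival to j (provided j is still unmatched).\<close>

type_synonym online_alg = "(real \<times> bool) list \<Rightarrow> real"

definition valid_alg :: "online_alg \<Rightarrow> bool" where
  "valid_alg alg \<longleftrightarrow> (\<forall>h. 0 \<le> alg h \<and> alg h \<le> 1) \<and>
     (\<forall>n m c. m \<le> n \<longrightarrow>
        (\<lambda>t. alg (hist t c m)) \<in> borel_measurable (PiM {..<n} (\<lambda>_. lborel)))"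

definition gain :: "real \<Rightarrow> online_alg \<Rightarrow> (nat \<Rightarrow> real) \<Rightarrow> (nat \<Rightarrow> bool) \<Rightarrow> nat \<Rightarrow> real" where
  "gain k alg t c n =
     (\<Sum>m<n. wt k (c m) * alg (hist t c (Suc m)) * (\<Prod>l<m. 1 - alg (hist t c (Suc l))))"

text \<open>Expected total matched weight under the Poisson arrival model on [0,1]: the marked
  Poisson process has, for each n, Janossy density
  exp(-(sum of rates)) * prod_i rate (c i) on ordered time vectors.\<close>

definition expected_weight :: "real \<Rightarrow> online_alg \<Rightarrow> ennreal" where
  "expected_weight k alg =
     (\<Sum>n. ennreal (exp (- (rate True + rate False))) *
        (\<integral>\<^sup>+ t. indicator {t. ordered_times n t} t *
            ennreal (\<Sum>c\<in>{..<n} \<rightarrow>\<^sub>E (UNIV :: bool set).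
                       (\<Prod>i<n. rate (c i)) * gain k alg t c n)
         \<partial>(PiM {..<n} (\<lambda>_. lborel))))"

definition alg1 :: "real \<Rightarrow> online_alg" where
  "alg1 t1 h = (let (t, c) = last h in if c \<or> t1 < t then 1 else 0)"

end

theory Submission
  imports Defs
begin


definition mg :: "nat \<Rightarrow> (nat \<Rightarrow> 'a) \<Rightarrow> (nat \<Rightarrow> 'a) \<Rightarrow> nat \<Rightarrow> 'a" where
  "mg L T x = (\<lambda>i. if i < L then T i else x i)"

definition Integ :: "nat \<Rightarrow> nat \<Rightarrow> (nat \<Rightarrow> real) \<Rightarrow> (nat \<Rightarrow> bool) \<Rightarrow>
   ((nat \<Rightarrow> real) \<Rightarrow> (nat \<Rightarrow> bool) \<Rightarrow> real) \<Rightarrow> (nat \<Rightarrow> real) \<Rightarrow> ennreal" where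
  "Integ L K T C f x = indicator {x. ordered_times K (mg L T x)} x *
     ennreal (\<Sum>c\<in>{L..<K} \<rightarrow>\<^sub>E (UNIV::bool set). (\<Prod>i\<in>{L..<K}. rate (c i)) * f (mg L T x) (mg L C c))"

definition good :: "((nat \<Rightarrow> real) \<Rightarrow> (nat \<Rightarrow> bool) \<Rightarrow> real) \<Rightarrow> nat \<Rightarrow> bool" where
  "good f K \<longleftrightarrow> (\<forall>c. (\<lambda>t. f t c) \<in> borel_measurable (PiM {..<K} (\<lambda>_. lborel))) \<and>
      (\<forall>t t' c. (\<forall>i<K. t i = t' i) \<longrightarrow> f t c = f t' c) \<and>
      (\<forall>t c c'. (\<forall>i<K. c i = c' i) \<longrightarrow> f t c = f t c')"

lemma mg_meas:
  "(\<lambda>x. restrict (mg L T x) {..<K}) \<in> measurable (PiM {L..<K} (\<lambda>_. lborel)) (PiM {..<K} (\<lambda>_. lborel))"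
proof (rule measurable_restrict)
  fix i assume "i \<in> {..<K}"
  show "(\<lambda>x. mg L T x i) \<in> measurable (PiM {L..<K} (\<lambda>_. lborel)) lborel"
  proof (cases "i < L")
    case True then show ?thesis by (simp add: mg_def)
  next
    case False
    then have "i \<in> {L..<K}" using \<open>i \<in> {..<K}\<close> by auto
    then show ?thesis using False by (simp add: mg_def)
  qed
qed

lemma good_meas:
  assumes "good f K"
  shows "(\<lambda>x. f (mg L T x) c) \<in> borel_measurable (PiM {L..<K} (\<lambda>_. lborel))"
proof -
  have eq: "f (mg L T x) c = f (restrict (mg L T x) {..<K}) c" for x
  proof -
    have "\<forall>i<K. mg L T x i = restrict (mg L T x) {..<K} i" by simp
    then show ?thesis using assms unfolding good_def by blast
  qed
  have "(\<lambda>x. f (restrict (mg L T x) {..<K}) c) \<in> borel_measurable (PiM {L..<K} (\<lambda>_. lborel))"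
  proof -
    have "(\<lambda>t. f t c) \<in> borel_measurable (PiM {..<K} (\<lambda>_. lborel))" using assms unfolding good_def by blast
    from measurable_comp[OF mg_meas this] show ?thesis unfolding comp_def .
  qed
  then show ?thesis using eq by simp
qed

lemma ord_sets: "{t \<in> space (PiM {..<K} (\<lambda>_. lborel)). ordered_times K t} \<in> sets (PiM {..<K} (\<lambda>_. lborel))"
proof -
  have eq: "ordered_times K t \<longleftrightarrow> (\<forall>i\<in>{..<K}. 0 < t i \<and> t i < 1) \<and> (\<forall>i\<in>{..<K}. \<forall>j\<in>{..<K}. j = Suc i \<longrightarrow> t i < t j)" for t
    unfolding ordered_times_def by auto
  have [measurable]: "i \<in> {..<K} \<Longrightarrow> (\<lambda>t. t i) \<in> borel_measurable (PiM {..<K} (\<lambda>_. lborel))" for i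
    by simp
  show ?thesis unfolding eq by measurable
qed

lemma ord_restrict: "ordered_times K (restrict t {..<K}) = ordered_times K t"
  unfolding ordered_times_def by auto

lemma ord_mg_meas: "{x \<in> space (PiM {L..<K} (\<lambda>_. lborel)). ordered_times K (mg L T x)} \<in> sets (PiM {L..<K} (\<lambda>_. lborel))"
proof -
  have "(\<lambda>x. restrict (mg L T x) {..<K}) -` {t \<in> space (PiM {..<K} (\<lambda>_. lborel)). ordered_times K t} \<inter> space (PiM {L..<K} (\<lambda>_. lborel)) \<in> sets (PiM {L..<K} (\<lambda>_. lborel))"
    using measurable_sets[OF mg_meas ord_sets] by blast
  also have "(\<lambda>x. restrict (mg L T x) {..<K}) -` {t \<in> space (PiM {..<K} (\<lambda>_. lborel)). ordered_times K t} \<inter> space (PiM {L..<K} (\<lambda>_. lborel))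
      = {x \<in> space (PiM {L..<K} (\<lambda>_. lborel)). ordered_times K (mg L T x)}"
    using measurable_space[OF mg_meas] by (auto simp: ord_restrict)
  finally show ?thesis .
qed

lemma Integ_meas:
  assumes "good f K"
  shows "Integ L K T C f \<in> borel_measurable (PiM {L..<K} (\<lambda>_. lborel))"
proof -
  have [measurable]: "(\<lambda>x. f (mg L T x) c) \<in> borel_measurable (PiM {L..<K} (\<lambda>_. lborel))" for c
    using good_meas[OF assms] .
  have i: "indicator {x. ordered_times K (mg L T x)} \<in> borel_measurable (PiM {L..<K} (\<lambda>_. lborel))"
    by (rule borel_measurable_indicator') (simp add: ord_mg_meas)
  have s: "(\<lambda>x. ennreal (\<Sum>c\<in>{L..<K} \<rightarrow>\<^sub>E (UNIV::bool set). (\<Prod>i\<in>{L..<K}. rate (c i)) * f (mg L T x) (mg L C c)))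
     \<in> borel_measurable (PiM {L..<K} (\<lambda>_. lborel))"
    by measurable
  show ?thesis unfolding Integ_def[abs_def]
    by (rule borel_measurable_times_ennreal[OF i s])
qed


lemma rate_pos: "rate b > 0"
  unfolding rate_def using ln_2_less_1 ln2_ge_two_thirds by auto

definition J :: "nat \<Rightarrow> nat \<Rightarrow> (nat \<Rightarrow> real) \<Rightarrow> (nat \<Rightarrow> bool) \<Rightarrow>
   ((nat \<Rightarrow> real) \<Rightarrow> (nat \<Rightarrow> bool) \<Rightarrow> real) \<Rightarrow> ennreal" where
  "J L n T C f = (\<integral>\<^sup>+ x. Integ L (L+n) T C f x \<partial>PiM {L..<L+n} (\<lambda>_. lborel))"

lemma sum_PiE_insert:
  assumes "finite I" "L \<notin> I"
  shows "(\<Sum>c\<in>insert L I \<rightarrow>\<^sub>E (UNIV::bool set). g c) = (\<Sum>b\<in>UNIV. \<Sum>c\<in>I \<rightarrow>\<^sub>E (UNIV::bool set). g (c(L:=b)))"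
proof -
  have "(\<Sum>c\<in>insert L I \<rightarrow>\<^sub>E (UNIV::bool set). g c) = (\<Sum>p\<in>UNIV \<times> (I \<rightarrow>\<^sub>E (UNIV::bool set)). g ((\<lambda>(y, h). h(L := y)) p))"
    unfolding PiE_insert_eq
    by (subst sum.reindex) (use inj_combinator[OF assms(2), of "\<lambda>_. UNIV"] in auto)
  also have "\<dots> = (\<Sum>b\<in>UNIV. \<Sum>c\<in>I \<rightarrow>\<^sub>E (UNIV::bool set). g (c(L:=b)))"
    unfolding sum.cartesian_product by (simp add: case_prod_unfold)
  finally show ?thesis .
qed

lemma mg_upd: "mg L T (x(L:=u)) = mg (Suc L) (T(L:=u)) x"
  unfolding mg_def by (rule ext) auto

lemma Integ_split:
  assumes nn: "\<And>t c. f t c \<ge> 0"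
  shows "Integ L (L + Suc n) T C f (x(L:=u)) =
     (\<Sum>b\<in>UNIV. ennreal (rate b) * Integ (Suc L) (Suc L + n) (T(L:=u)) (C(L:=b)) f x)"
proof -
  let ?I = "{Suc L..<Suc L + n}"
  have ins: "{L..<L + Suc n} = insert L ?I" by auto
  have K: "L + Suc n = Suc L + n" by simp
  define S where "S b = (\<Sum>c\<in>?I \<rightarrow>\<^sub>E (UNIV::bool set). (\<Prod>i\<in>?I. rate (c i)) * f (mg (Suc L) (T(L:=u)) x) (mg (Suc L) (C(L:=b)) c))" for b
  have Snn: "S b \<ge> 0" for b unfolding S_def
    by (intro sum_nonneg mult_nonneg_nonneg prod_nonneg nn) (auto intro: less_imp_le rate_pos)
  have "(\<Sum>c\<in>{L..<L + Suc n} \<rightarrow>\<^sub>E (UNIV::bool set). (\<Prod>i\<in>{L..<L + Suc n}. rate (c i)) * f (mg L T (x(L:=u))) (mg L C c))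
     = (\<Sum>b\<in>UNIV. \<Sum>c\<in>?I \<rightarrow>\<^sub>E (UNIV::bool set). (\<Prod>i\<in>insert L ?I. rate ((c(L:=b)) i)) * f (mg L T (x(L:=u))) (mg L C (c(L:=b))))"
    unfolding ins by (rule sum_PiE_insert) auto
  also have "\<dots> = (\<Sum>b\<in>UNIV. rate b * S b)"
  proof (rule sum.cong[OF refl])
    fix b
    have p: "(\<Prod>i\<in>insert L ?I. rate ((c(L:=b)) i)) = rate b * (\<Prod>i\<in>?I. rate (c i))" for c :: "nat \<Rightarrow> bool"
      by (subst prod.insert) (auto intro!: prod.cong)
    have m: "mg L C (c(L:=b)) = mg (Suc L) (C(L:=b)) c" for c :: "nat \<Rightarrow> bool" by (rule mg_upd)
    show "(\<Sum>c\<in>?I \<rightarrow>\<^sub>E (UNIV::bool set). (\<Prod>i\<in>insert L ?I. rate ((c(L:=b)) i)) * f (mg L T (x(L:=u))) (mg L C (c(L:=b)))) = rate b * S b"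
      unfolding p m S_def mg_upd by (simp add: sum_distrib_left mult.assoc)
  qed
  finally have e: "(\<Sum>c\<in>{L..<L + Suc n} \<rightarrow>\<^sub>E (UNIV::bool set). (\<Prod>i\<in>{L..<L + Suc n}. rate (c i)) * f (mg L T (x(L:=u))) (mg L C c))
     = (\<Sum>b\<in>UNIV. rate b * S b)" .
  have "Integ L (L + Suc n) T C f (x(L:=u)) = indicator {x. ordered_times (Suc L + n) (mg (Suc L) (T(L:=u)) x)} x * ennreal (\<Sum>b\<in>UNIV. rate b * S b)"
    unfolding Integ_def e by (simp add: mg_upd K indicator_def)
  also have "\<dots> = (\<Sum>b\<in>UNIV. ennreal (rate b) * (indicator {x. ordered_times (Suc L + n) (mg (Suc L) (T(L:=u)) x)} x * ennreal (S b)))"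
    by (subst sum_ennreal[symmetric]) (auto intro!: mult_nonneg_nonneg Snn less_imp_le[OF rate_pos] simp: ennreal_mult[OF less_imp_le[OF rate_pos] Snn] sum_distrib_left mult.left_commute indicator_def)
  also have "\<dots> = (\<Sum>b\<in>UNIV. ennreal (rate b) * Integ (Suc L) (Suc L + n) (T(L:=u)) (C(L:=b)) f x)"
    unfolding Integ_def S_def by simp
  finally show ?thesis .
qed

lemma J_Suc:
  assumes g: "good f (L + Suc n)" and nn: "\<And>t c. f t c \<ge> 0"
  shows "J L (Suc n) T C f = (\<integral>\<^sup>+ u. (\<Sum>b\<in>UNIV. ennreal (rate b) * J (Suc L) n (T(L:=u)) (C(L:=b)) f) \<partial>lborel)"
proof -
  interpret P: product_sigma_finite "\<lambda>_::nat. lborel::real measure" by standard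
  let ?I = "{Suc L..<Suc L + n}"
  have ins: "{L..<L + Suc n} = insert L ?I" by auto
  have g2: "good f (Suc L + n)" using g by simp
  have m: "Integ L (L+Suc n) T C f \<in> borel_measurable (PiM (insert L ?I) (\<lambda>_. lborel))"
    using Integ_meas[OF g, of L T C] unfolding ins .
  have "J L (Suc n) T C f = (\<integral>\<^sup>+ u. \<integral>\<^sup>+ x. Integ L (L + Suc n) T C f (x(L:=u)) \<partial>PiM ?I (\<lambda>_. lborel) \<partial>lborel)"
    unfolding J_def ins
    by (rule P.product_nn_integral_insert_rev[OF _ _ m]) auto
  also have "\<dots> = (\<integral>\<^sup>+ u. (\<Sum>b\<in>UNIV. ennreal (rate b) * J (Suc L) n (T(L:=u)) (C(L:=b)) f) \<partial>lborel)"
  proof (rule nn_integral_cong)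
    fix u
    show "(\<integral>\<^sup>+ x. Integ L (L + Suc n) T C f (x(L:=u)) \<partial>PiM ?I (\<lambda>_. lborel)) = (\<Sum>b\<in>UNIV. ennreal (rate b) * J (Suc L) n (T(L:=u)) (C(L:=b)) f)"
    proof -
      have mm: "(\<lambda>x. ennreal (rate b) * Integ (Suc L) (Suc L + n) (T(L:=u)) (C(L:=b)) f x) \<in> borel_measurable (PiM ?I (\<lambda>_. lborel))" for b
        by (rule borel_measurable_times_ennreal[OF borel_measurable_const Integ_meas[OF g2]])
      show ?thesis
        unfolding Integ_split[OF nn] J_def
        by (simp only: nn_integral_sum[OF mm] nn_integral_cmult[OF Integ_meas[OF g2]])
    qed
  qed
  finally show ?thesis .
qed


definition lb :: "nat \<Rightarrow> (nat \<Rightarrow> real) \<Rightarrow> real" where "lb L T = (if L = 0 then 0 else T (L - 1))"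

lemma ord_local: "(\<forall>i<K. t i = t' i) \<Longrightarrow> ordered_times K t = ordered_times K t'"
  unfolding ordered_times_def by (metis Suc_lessD)

lemma ord_mono: "ordered_times K t \<Longrightarrow> L \<le> K \<Longrightarrow> ordered_times L t"
  unfolding ordered_times_def by auto

lemma ord_Suc: "ordered_times (Suc L) (T(L:=u)) \<longleftrightarrow> ordered_times L T \<and> lb L T < u \<and> u < 1"
proof (cases L)
  case 0 then show ?thesis unfolding ordered_times_def lb_def by auto
next
  case (Suc m)
  show ?thesis
  proof
    assume a: "ordered_times (Suc L) (T(L:=u))"
    have "ordered_times L (T(L:=u))" using ord_mono[OF a] by simp
    then have "ordered_times L T" by (subst ord_local[of L _ "T(L:=u)"]) auto
    moreover have "T m < u" using a Suc unfolding ordered_times_def by (metis fun_upd_apply lessI n_not_Suc_n)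
    moreover have "u < 1" using a unfolding ordered_times_def by (metis fun_upd_same lessI)
    ultimately show "ordered_times L T \<and> lb L T < u \<and> u < 1" using Suc unfolding lb_def by simp
  next
    assume a: "ordered_times L T \<and> lb L T < u \<and> u < 1"
    then have o: "ordered_times L T" and tm: "T m < u" and u1: "u < 1" using Suc unfolding lb_def by auto
    have tm0: "0 < T m" using o Suc unfolding ordered_times_def by auto
    show "ordered_times (Suc L) (T(L:=u))"
      unfolding ordered_times_def
    proof (intro conjI allI impI)
      fix i assume "i < Suc L"
      then show "0 < (T(L:=u)) i" "(T(L:=u)) i < 1"
        using o tm tm0 u1 unfolding ordered_times_def by (auto simp: less_Suc_eq)
    next
      fix i assume "Suc i < Suc L"
      then show "(T(L:=u)) i < (T(L:=u)) (Suc i)"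
        using o tm Suc unfolding ordered_times_def by (auto simp: less_Suc_eq)
    qed
  qed
qed

lemma lb_Suc: "lb (Suc L) (T(L:=u)) = u" unfolding lb_def by simp

lemma Integ_unord: "\<not> ordered_times L T \<Longrightarrow> Integ L (L + n) T C f x = 0"
proof -
  assume n: "\<not> ordered_times L T"
  have "\<not> ordered_times (L + n) (mg L T x)"
  proof
    assume "ordered_times (L + n) (mg L T x)"
    then have "ordered_times L (mg L T x)" by (rule ord_mono) simp
    then have "ordered_times L T" by (subst ord_local[of L _ "mg L T x"]) (auto simp: mg_def)
    then show False using n by simp
  qed
  then show ?thesis unfolding Integ_def by simp
qed

lemma J_unord: "\<not> ordered_times L T \<Longrightarrow> J L n T C f = 0"
proof -
  assume "\<not> ordered_times L T"
  then have "Integ L (L + n) T C f = (\<lambda>x. 0)" using Integ_unord by blast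
  then show ?thesis unfolding J_def by simp
qed

lemma J_zero:
  assumes g: "good f L"
  shows "J L 0 T C f = (if ordered_times L T then ennreal (f T C) else 0)"
proof -
  have "Integ L (L + 0) T C f = (\<lambda>x. if ordered_times L T then ennreal (f T C) else 0)"
  proof (rule ext)
    fix x
    have o: "ordered_times L (mg L T x) = ordered_times L T" by (rule ord_local) (simp add: mg_def)
    have f1: "f (mg L T x) c = f T c" for c using g unfolding good_def by (metis mg_def)
    have f2: "f T (mg L C c) = f T C" for c using g unfolding good_def by (metis mg_def)
    show "Integ L (L + 0) T C f x = (if ordered_times L T then ennreal (f T C) else 0)"
      unfolding Integ_def using o f1 f2 by (simp add: indicator_def)
  qed
  then have "J L 0 T C f = (\<integral>\<^sup>+ x. (if ordered_times L T then ennreal (f T C) else 0) \<partial>PiM ({}::nat set) (\<lambda>_. lborel::real measure))"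
    unfolding J_def by (simp only:) simp
  also have "\<dots> = (if ordered_times L T then ennreal (f T C) else 0)"
    by (simp add: PiM_empty)
  finally show ?thesis .
qed

lemma psi_meas:
  "(\<lambda>z. restrict (mg (Suc L) (T(L:=fst z)) (snd z)) {..<K}) \<in> measurable (lborel \<Otimes>\<^sub>M PiM {Suc L..<K} (\<lambda>_. lborel)) (PiM {..<K} (\<lambda>_. lborel))"
proof (rule measurable_restrict)
  fix i assume i: "i \<in> {..<K}"
  show "(\<lambda>z. mg (Suc L) (T(L:=fst z)) (snd z) i) \<in> measurable (lborel \<Otimes>\<^sub>M PiM {Suc L..<K} (\<lambda>_. lborel)) lborel"
  proof (cases "i < L")
    case True then show ?thesis by (simp add: mg_def)
  next
    case False
    show ?thesis
    proof (cases "i = L")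
      case True then show ?thesis by (simp add: mg_def)
    next
      case False
      then have "i \<in> {Suc L..<K}" "\<not> i < Suc L" using i \<open>\<not> i < L\<close> by auto
      then show ?thesis by (simp add: mg_def)
    qed
  qed
qed

lemma J_meas_u:
  assumes g: "good f (Suc L + n)"
  shows "(\<lambda>u. J (Suc L) n (T(L:=u)) C' f) \<in> borel_measurable lborel"
proof -
  let ?K = "Suc L + n"
  let ?N = "lborel \<Otimes>\<^sub>M PiM {Suc L..<?K} (\<lambda>_. lborel)"
  let ?psi = "\<lambda>z. restrict (mg (Suc L) (T(L:=fst z)) (snd z)) {..<?K}"
  interpret P: product_sigma_finite "\<lambda>_::nat. lborel::real measure" by standard
  interpret S: sigma_finite_measure "PiM {Suc L..<?K} (\<lambda>_. lborel::real measure)"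
    by (rule P.sigma_finite) auto
  have fm: "(\<lambda>t. f t c) \<in> borel_measurable (PiM {..<?K} (\<lambda>_. lborel))" for c using g unfolding good_def by blast
  have fm': "(\<lambda>z. f (?psi z) c) \<in> borel_measurable ?N" for c
    using measurable_comp[OF psi_meas fm] unfolding comp_def .
  have os[measurable]: "{z \<in> space ?N. ordered_times ?K (?psi z)} \<in> sets ?N"
  proof -
    have "?psi -` {t \<in> space (PiM {..<?K} (\<lambda>_. lborel)). ordered_times ?K t} \<inter> space ?N \<in> sets ?N"
      using measurable_sets[OF psi_meas ord_sets] by blast
    also have "?psi -` {t \<in> space (PiM {..<?K} (\<lambda>_. lborel)). ordered_times ?K t} \<inter> space ?N = {z \<in> space ?N. ordered_times ?K (?psi z)}"
      using measurable_space[OF psi_meas] by auto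
    finally show ?thesis .
  qed
  have ind: "(\<lambda>z. indicator {z. ordered_times ?K (?psi z)} z :: ennreal) \<in> borel_measurable ?N"
    by (rule borel_measurable_indicator', unfold mem_Collect_eq, rule os)
  have "(\<lambda>z. indicator {z. ordered_times ?K (?psi z)} z * ennreal (\<Sum>c\<in>{Suc L..<?K} \<rightarrow>\<^sub>E (UNIV::bool set). (\<Prod>i\<in>{Suc L..<?K}. rate (c i)) * f (?psi z) (mg (Suc L) C' c))) \<in> borel_measurable ?N"
  proof (rule borel_measurable_times_ennreal[OF ind])
    define S where "S z = (\<Sum>c\<in>{Suc L..<?K} \<rightarrow>\<^sub>E (UNIV::bool set). (\<Prod>i\<in>{Suc L..<?K}. rate (c i)) * f (?psi z) (mg (Suc L) C' c))" for z
    have "S \<in> borel_measurable ?N" unfolding S_def[abs_def]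
      by (intro borel_measurable_sum borel_measurable_times borel_measurable_const fm')
    then have "(\<lambda>z. ennreal (S z)) \<in> borel_measurable ?N" by simp
    then show "(\<lambda>z. ennreal (\<Sum>c\<in>{Suc L..<?K} \<rightarrow>\<^sub>E (UNIV::bool set). (\<Prod>i\<in>{Suc L..<?K}. rate (c i)) * f (?psi z) (mg (Suc L) C' c))) \<in> borel_measurable ?N"
      unfolding S_def .
  qed
  moreover have "Integ (Suc L) ?K (T(L:=fst z)) C' f (snd z) = indicator {z. ordered_times ?K (?psi z)} z * ennreal (\<Sum>c\<in>{Suc L..<?K} \<rightarrow>\<^sub>E (UNIV::bool set). (\<Prod>i\<in>{Suc L..<?K}. rate (c i)) * f (?psi z) (mg (Suc L) C' c))" for z
  proof -
    have "f (mg (Suc L) (T(L:=fst z)) (snd z)) c = f (?psi z) c" for c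
    proof -
      have "\<forall>i<?K. mg (Suc L) (T(L:=fst z)) (snd z) i = ?psi z i" by simp
      then show ?thesis using g unfolding good_def by blast
    qed
    moreover have "ordered_times ?K (mg (Suc L) (T(L:=fst z)) (snd z)) = ordered_times ?K (?psi z)"
      by (rule ord_local) simp
    ultimately show ?thesis unfolding Integ_def by (simp add: indicator_def)
  qed
  ultimately have "(\<lambda>z. Integ (Suc L) ?K (T(L:=fst z)) C' f (snd z)) \<in> borel_measurable ?N" by simp
  then have "(\<lambda>u. \<integral>\<^sup>+ x. Integ (Suc L) ?K (T(L:=u)) C' f x \<partial>PiM {Suc L..<?K} (\<lambda>_. lborel)) \<in> borel_measurable lborel"
    by (intro S.borel_measurable_nn_integral) (simp add: case_prod_beta)
  then show ?thesis unfolding J_def .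
qed




definition Lam :: real where "Lam = rate True + rate False"

lemma Lam_eq: "Lam = 1 + ln 2" unfolding Lam_def rate_def by simp
lemma ln2_bounds: "2/3 \<le> ln (2::real)" "ln (2::real) < 1" using ln2_ge_two_thirds ln_2_less_1 by auto
lemma Lam_pos: "Lam > 0" using Lam_eq ln2_bounds by simp
lemma rT: "rate True = 1 - ln 2" and rF: "rate False = 2 * ln 2" unfolding rate_def by auto

definition cs :: "real \<Rightarrow> real" where "cs k = (rate True * k + rate False) / Lam"
definition Aacc :: "real \<Rightarrow> real \<Rightarrow> real" where "Aacc k s = cs k * (1 - exp (- Lam * (1 - s)))"
definition tt :: "real \<Rightarrow> real" where
  "tt k = (if cs k * (1 - exp (- Lam)) \<le> 1 then 0 else 1 + ln (1 - 1 / cs k) / Lam)"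
definition Bf :: "real \<Rightarrow> real \<Rightarrow> real" where "Bf k s = k - (k - 1) * exp (- rate True * (tt k - s))"
definition V :: "real \<Rightarrow> real \<Rightarrow> real" where "V k s = (if s < tt k then Bf k s else Aacc k s)"
definition Hf :: "real \<Rightarrow> real \<Rightarrow> real" where "Hf k u = (\<Sum>b\<in>UNIV. rate b * max (wt k b) (V k u))"

context fixes k :: real assumes k1: "k \<ge> 1"
begin

lemma cs_bounds: "1 \<le> cs k" "cs k \<le> k"
proof -
  have rp: "rate True > 0" "rate False > 0" using ln2_bounds unfolding rate_def by auto
  have "Lam \<le> rate True * k + rate False" unfolding Lam_def using k1 rp by (simp add: mult_le_cancel_left1)
  then show "1 \<le> cs k" unfolding cs_def using Lam_pos by simp
  have "rate True * k + rate False \<le> Lam * k" unfolding Lam_def using k1 rp by (simp add: algebra_simps mult_le_cancel_left1)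
  then show "cs k \<le> k" unfolding cs_def using Lam_pos by (simp add: divide_le_eq mult.commute)
qed

lemma tt_pos_facts:
  assumes "tt k > 0"
  shows "cs k > 1" "1 - 1 / cs k > exp (- Lam)" "tt k < 1" "Aacc k (tt k) = 1"
proof -
  have g: "cs k * (1 - exp (- Lam)) > 1" using assms unfolding tt_def by (auto split: if_splits)
  have e0: "exp (- Lam) > 0" by simp
  have "cs k * (1 - exp (- Lam)) \<le> cs k" using e0 cs_bounds by (intro mult_left_le) auto
  then show c1: "cs k > 1" using g by simp
  have "1 / cs k < 1 - exp (- Lam)" using g c1 by (simp add: divide_less_eq mult.commute)
  then show ex: "1 - 1 / cs k > exp (- Lam)" by simp
  have p: "0 < 1 - 1 / cs k" using c1 by simp
  have "1 - 1 / cs k < 1" using c1 by simp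
  then have "ln (1 - 1 / cs k) < 0" using p by simp
  then show "tt k < 1" unfolding tt_def using Lam_pos assms unfolding tt_def
    by (auto split: if_splits simp: divide_neg_pos add_neg_nonpos)
  have "tt k = 1 + ln (1 - 1 / cs k) / Lam" using assms unfolding tt_def by (auto split: if_splits)
  then have "- Lam * (1 - tt k) = ln (1 - 1 / cs k)" using Lam_pos by (simp add: field_simps)
  then have "exp (- Lam * (1 - tt k)) = 1 - 1 / cs k" using p by simp
  then show "Aacc k (tt k) = 1" unfolding Aacc_def using c1 by (simp add: field_simps)
qed

lemma tt_big: assumes "cs k * (1 - exp (- Lam)) > 1" shows "tt k > 0"
proof -
  have e0: "exp (- Lam) > 0" by simp
  have "cs k * (1 - exp (- Lam)) \<le> cs k" using e0 cs_bounds by (intro mult_left_le) auto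
  then have c1: "cs k > 1" using assms by simp
  have "1 / cs k < 1 - exp (- Lam)" using assms c1 by (simp add: divide_less_eq mult.commute)
  then have "exp (- Lam) < 1 - 1 / cs k" by simp
  then have "- Lam < ln (1 - 1 / cs k)" by (metis exp_gt_zero exp_less_cancel_iff exp_ln less_trans)
  then have "-1 < ln (1 - 1 / cs k) / Lam" using Lam_pos by (simp add: less_divide_eq)
  then show ?thesis unfolding tt_def using assms by simp
qed

lemma tt_small: assumes "cs k * (1 - exp (- Lam)) \<le> 1" shows "tt k = 0"
  using assms unfolding tt_def by simp

lemma tt_range: "0 \<le> tt k" "tt k < 1"
proof -
  show "0 \<le> tt k"
    using tt_big tt_small by (cases "cs k * (1 - exp (- Lam)) \<le> 1") force+
  show "tt k < 1"
  proof (cases "tt k > 0")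
    case True then show ?thesis using tt_pos_facts by simp
  next
    case False then show ?thesis using \<open>0 \<le> tt k\<close> by simp
  qed
qed

lemma Aacc_mono: "s \<le> s' \<Longrightarrow> Aacc k s' \<le> Aacc k s"
  unfolding Aacc_def using cs_bounds Lam_pos
  by (intro mult_left_mono) (auto simp: mult_le_cancel_left_pos)

lemma Aacc_nonneg: "s \<le> 1 \<Longrightarrow> 0 \<le> Aacc k s"
  unfolding Aacc_def using cs_bounds Lam_pos by (intro mult_nonneg_nonneg) (auto simp: mult_le_0_iff)

lemma Aacc_le1: assumes "tt k \<le> s" "s \<le> 1" shows "Aacc k s \<le> 1"
proof (cases "tt k > 0")
  case True
  then show ?thesis using Aacc_mono[OF assms(1)] tt_pos_facts(4) by simp
next
  case False
  then have "tt k = 0" using tt_range by simp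
  then have "cs k * (1 - exp (- Lam)) \<le> 1" using tt_big by force
  then have "Aacc k 0 \<le> 1" unfolding Aacc_def by simp
  then show ?thesis using Aacc_mono[of 0 s] assms \<open>tt k = 0\<close> by simp
qed

lemma Bf_bounds: assumes "s \<le> tt k" shows "1 \<le> Bf k s" "Bf k s \<le> k"
proof -
  have "(ln 2 - 1) * (tt k - s) \<le> 0" using assms ln2_bounds by (intro mult_nonpos_nonneg) auto
  then have "exp (- rate True * (tt k - s)) \<le> 1" unfolding rate_def by simp
  moreover have "exp (- rate True * (tt k - s)) > 0" by simp
  ultimately have "(k - 1) * exp (- rate True * (tt k - s)) \<le> k - 1" "0 \<le> (k - 1) * exp (- rate True * (tt k - s))"
    using k1 by (auto intro: mult_left_le)
  then show "1 \<le> Bf k s" "Bf k s \<le> k" unfolding Bf_def by auto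
qed

lemma Bf_tt: "Bf k (tt k) = 1" unfolding Bf_def by simp

lemma V_bounds: assumes "0 \<le> s" "s \<le> 1" shows "0 \<le> V k s" "V k s \<le> k"
  using Bf_bounds[of s] Aacc_le1[of s] Aacc_nonneg[of s] assms k1 unfolding V_def by auto

lemma V_lt: "s < tt k \<Longrightarrow> 1 \<le> V k s" using Bf_bounds unfolding V_def by auto
lemma V_ge: "tt k \<le> s \<Longrightarrow> s \<le> 1 \<Longrightarrow> V k s \<le> 1" using Aacc_le1 unfolding V_def by auto

lemma Hf_eq: assumes "0 \<le> u" "u \<le> 1"
  shows "Hf k u = rate True * k + rate False * (if u < tt k then Bf k u else 1)"
proof -
  have "max k (V k u) = k" using V_bounds[OF assms] by simp
  moreover have "max 1 (V k u) = (if u < tt k then Bf k u else 1)"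
    using V_lt[of u] V_ge[of u] assms unfolding V_def by auto
  ultimately show ?thesis unfolding Hf_def wt_def by (simp add: UNIV_bool)
qed

lemma piece_A: assumes "tt k \<le> a" "a \<le> 1"
  shows "((\<lambda>u. exp (- Lam * u) * Hf k u) has_integral exp (- Lam * a) * Aacc k a) {a..1}"
proof -
  define f where "f s = - cs k * (exp (- Lam * s) - exp (- Lam))" for s
  have cL: "cs k * Lam = rate True * k + rate False" unfolding cs_def using Lam_pos by simp
  have "(f has_vector_derivative exp (- Lam * x) * Hf k x) (at x within {a..1})" if x: "x \<in> {a..1}" for x
  proof -
    have "0 \<le> x" "x \<le> 1" "\<not> x < tt k" using x assms tt_range by auto
    then have h: "Hf k x = cs k * Lam" using Hf_eq cL by simp
    have "(f has_real_derivative exp (- Lam * x) * (cs k * Lam)) (at x within {a..1})"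
      unfolding f_def by (auto intro!: derivative_eq_intros simp: algebra_simps)
    then show ?thesis unfolding h has_real_derivative_iff_has_vector_derivative .
  qed
  from fundamental_theorem_of_calculus[OF assms(2) this]
  have "((\<lambda>u. exp (- Lam * u) * Hf k u) has_integral f 1 - f a) {a..1}" .
  moreover have "f 1 - f a = exp (- Lam * a) * Aacc k a"
  proof -
    have "exp (- Lam * a) * exp (- Lam * (1 - a)) = exp (- Lam)" by (simp add: mult_exp_exp algebra_simps)
    then show ?thesis unfolding f_def Aacc_def by (simp add: algebra_simps)
  qed
  ultimately show ?thesis by simp
qed

lemma piece_B: assumes "0 \<le> a" "a \<le> tt k"
  shows "((\<lambda>u. exp (- Lam * u) * Hf k u) has_integral exp (- Lam * a) * Bf k a - exp (- Lam * tt k)) {a..tt k}"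
proof -
  define f where "f s = - (exp (- Lam * s) * Bf k s)" for s
  have "(f has_vector_derivative exp (- Lam * x) * Hf k x) (at x within {a..tt k})" if x: "x \<in> {a..tt k}" for x
  proof -
    have x01: "0 \<le> x" "x \<le> 1" using x assms tt_range by auto
    have h: "Hf k x = rate True * k + rate False * Bf k x"
      using Hf_eq[OF x01] Bf_tt x by (cases "x < tt k") auto
    have "(f has_real_derivative exp (- Lam * x) * (rate True * k + rate False * Bf k x)) (at x within {a..tt k})"
      unfolding f_def Bf_def by (auto intro!: derivative_eq_intros simp: algebra_simps Lam_def)
    then show ?thesis unfolding h has_real_derivative_iff_has_vector_derivative .
  qed
  from fundamental_theorem_of_calculus[OF assms(2) this]
  have "((\<lambda>u. exp (- Lam * u) * Hf k u) has_integral f (tt k) - f a) {a..tt k}" .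
  then show ?thesis unfolding f_def Bf_tt by (simp add: algebra_simps)
qed

lemma V_int0: assumes "0 \<le> a" "a \<le> 1"
  shows "((\<lambda>u. exp (- Lam * u) * Hf k u) has_integral exp (- Lam * a) * V k a) {a..1}"
proof (cases "a < tt k")
  case False
  then show ?thesis using piece_A[of a] assms unfolding V_def by simp
next
  case True
  then have tp: "tt k > 0" using assms by simp
  have "((\<lambda>u. exp (- Lam * u) * Hf k u) has_integral
      (exp (- Lam * a) * Bf k a - exp (- Lam * tt k)) + exp (- Lam * tt k) * Aacc k (tt k)) {a..1}"
    by (rule has_integral_combine[OF _ _ piece_B piece_A]) (use True assms tt_range in auto)
  then show ?thesis using True tt_pos_facts(4)[OF tp] unfolding V_def by simp
qed

lemma V_int: assumes "0 \<le> a" "a \<le> 1"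
  shows "((\<lambda>u. exp (- Lam * (u - a)) * Hf k u) has_integral V k a) {a..1}"
proof -
  have h1: "((\<lambda>u. exp (Lam * a) * (exp (- Lam * u) * Hf k u)) has_integral exp (Lam * a) * (exp (- Lam * a) * V k a)) {a..1}"
    by (rule has_integral_mult_right[OF V_int0[OF assms]])
  have ee: "exp (Lam * a) * exp (- Lam * u) = exp (- Lam * (u - a))" for u
    by (simp add: mult_exp_exp algebra_simps)
  have e2: "(\<lambda>u. exp (Lam * a) * (exp (- Lam * u) * Hf k u)) = (\<lambda>u. exp (- Lam * (u - a)) * Hf k u)"
    by (rule ext) (simp only: mult.assoc[symmetric] ee)
  have e3: "exp (Lam * a) * (exp (- Lam * a) * V k a) = V k a"
    by (simp only: mult.assoc[symmetric] ee) simp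
  show ?thesis using h1 unfolding e2 e3 .
qed

end

lemma k_int: assumes "a \<le> 1"
  shows "((\<lambda>u. Lam * exp (- Lam * (u - a)) * k) has_integral k * (1 - exp (- Lam * (1 - a)))) {a..1}"
proof -
  define f where "f u = - k * exp (- Lam * (u - a))" for u
  have "(f has_vector_derivative Lam * exp (- Lam * (x - a)) * k) (at x within {a..1})" for x
  proof -
    have "(f has_real_derivative Lam * exp (- Lam * (x - a)) * k) (at x within {a..1})"
      unfolding f_def by (auto intro!: derivative_eq_intros simp: algebra_simps)
    then show ?thesis unfolding has_real_derivative_iff_has_vector_derivative .
  qed
  from fundamental_theorem_of_calculus[OF assms this]
  show ?thesis unfolding f_def by (simp add: algebra_simps)
qed

lemma vol_int: assumes "a \<le> 1"
  shows "((\<lambda>u. Lam * (Lam ^ n * (1 - u) ^ n / fact n)) has_integral Lam ^ Suc n * (1 - a) ^ Suc n / fact (Suc n)) {a..1}"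
proof -
  define C where "C = Lam ^ Suc n / fact (Suc n)"
  define f where "f u = - (C * (1 - u) ^ Suc n)" for u
  have "(f has_vector_derivative Lam * (Lam ^ n * (1 - x) ^ n / fact n)) (at x within {a..1})" for x
  proof -
    have d1: "((\<lambda>u. 1 - u) has_real_derivative -1) (at x within {a..1})"
      by (auto intro!: derivative_eq_intros)
    have d2: "(f has_real_derivative - (C * ((1 + of_nat n) * (-1 * (1 - x) ^ n)))) (at x within {a..1})"
      unfolding f_def by (intro DERIV_minus DERIV_cmult DERIV_power_Suc d1)
    have nz: "fact n + fact n * real n \<noteq> (0::real)"
      using fact_gt_zero[where 'a=real, of n] by (smt (verit) mult_nonneg_nonneg of_nat_0_le_iff)
    moreover have "C * (1 + real n) = Lam ^ Suc n / fact n"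
      unfolding C_def fact_Suc using nz by (simp add: field_simps)
    then have e: "- (C * ((1 + of_nat n) * (-1 * (1 - x) ^ n))) = Lam * (Lam ^ n * (1 - x) ^ n / fact n)"
    proof -
      assume h: "C * (1 + real n) = Lam ^ Suc n / fact n"
      have "- (C * ((1 + of_nat n) * (-1 * (1 - x) ^ n))) = (C * (1 + real n)) * (1 - x) ^ n"
        by (simp add: algebra_simps)
      also have "\<dots> = Lam * (Lam ^ n * (1 - x) ^ n / fact n)" unfolding h by simp
      finally show ?thesis .
    qed
    show ?thesis using d2 unfolding e has_real_derivative_iff_has_vector_derivative .
  qed
  from fundamental_theorem_of_calculus[OF assms this]
  show ?thesis unfolding f_def C_def by simp
qed

definition Mr :: "nat \<Rightarrow> real \<Rightarrow> real" where
  "Mr N a = (\<Sum>n<N. exp (- Lam * (1 - a)) * (Lam ^ n * (1 - a) ^ n / fact n))"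

lemma Mr_le1: assumes "a \<le> 1" shows "Mr N a \<le> 1"
proof -
  define x where "x = Lam * (1 - a)"
  have x0: "0 \<le> x" unfolding x_def using assms Lam_pos by simp
  have "(\<lambda>n. x ^ n / fact n) sums exp x" using exp_converges[of x] by (simp add: divide_inverse mult.commute)
  then have "(\<Sum>n<N. x ^ n / fact n) \<le> exp x"
    using sum_le_suminf[of "\<lambda>n. x ^ n / fact n" "{..<N}"] x0 by (auto simp: sums_iff)
  then have "exp (- x) * (\<Sum>n<N. x ^ n / fact n) \<le> exp (- x) * exp x" by simp
  then show ?thesis unfolding Mr_def x_def by (simp add: sum_distrib_left power_mult_distrib mult_exp_exp)
qed

lemma Mr_nonneg: "0 \<le> a \<Longrightarrow> a \<le> 1 \<Longrightarrow> 0 \<le> Mr N a"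
  unfolding Mr_def using Lam_pos by (intro sum_nonneg mult_nonneg_nonneg divide_nonneg_pos) auto

lemma Mr_lim: "(\<lambda>N. Mr N 0) \<longlonglongrightarrow> 1"
proof -
  have "(\<lambda>n. Lam ^ n / fact n) sums exp Lam" using exp_converges[of Lam] by (simp add: divide_inverse mult.commute)
  then have "(\<lambda>N. \<Sum>n<N. Lam ^ n / fact n) \<longlonglongrightarrow> exp Lam" by (simp add: sums_def)
  then have "(\<lambda>N. exp (- Lam) * (\<Sum>n<N. Lam ^ n / fact n)) \<longlonglongrightarrow> exp (- Lam) * exp Lam"
    by (rule tendsto_mult_left)
  then show ?thesis unfolding Mr_def by (simp add: sum_distrib_left mult_exp_exp)
qed




definition gs :: "online_alg \<Rightarrow> real \<Rightarrow> nat \<Rightarrow> nat \<Rightarrow> (nat \<Rightarrow> real) \<Rightarrow> (nat \<Rightarrow> bool) \<Rightarrow> real" where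
  "gs alg k L K t c = (\<Sum>m\<in>{L..<K}. wt k (c m) * alg (hist t c (Suc m)) * (\<Prod>l\<in>{L..<m}. 1 - alg (hist t c (Suc l))))"

lemma gain_gs: "gain k alg t c n = gs alg k 0 n t c"
  unfolding gain_def gs_def by (simp add: atLeast0LessThan)

lemma gs_rec: assumes "L < K"
  shows "gs alg k L K t c = wt k (c L) * alg (hist t c (Suc L)) + (1 - alg (hist t c (Suc L))) * gs alg k (Suc L) K t c"
proof -
  have e: "{L..<K} = insert L {Suc L..<K}" using assms by auto
  have p: "(\<Prod>l\<in>{L..<m}. 1 - alg (hist t c (Suc l))) = (1 - alg (hist t c (Suc L))) * (\<Prod>l\<in>{Suc L..<m}. 1 - alg (hist t c (Suc l)))"
    if "m \<in> {Suc L..<K}" for m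
  proof -
    have "{L..<m} = insert L {Suc L..<m}" using that by auto
    then show ?thesis by simp
  qed
  have s: "(\<Sum>m\<in>{Suc L..<K}. wt k (c m) * alg (hist t c (Suc m)) * (\<Prod>l\<in>{L..<m}. 1 - alg (hist t c (Suc l))))
     = (1 - alg (hist t c (Suc L))) * (\<Sum>m\<in>{Suc L..<K}. wt k (c m) * alg (hist t c (Suc m)) * (\<Prod>l\<in>{Suc L..<m}. 1 - alg (hist t c (Suc l))))"
    unfolding sum_distrib_left by (rule sum.cong[OF refl]) (simp add: p)
  show ?thesis unfolding gs_def e using s by simp
qed

lemma gs_empty: "gs alg k L L t c = 0" unfolding gs_def by simp

lemma hist_local: "(\<And>i. i < m \<Longrightarrow> t i = t' i \<and> c i = c' i) \<Longrightarrow> hist t c m = hist t' c' m"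
  unfolding hist_def by simp

lemma last_hist: "last (hist t c (Suc m)) = (t m, c m)"
  unfolding hist_def by simp

lemma wt_nonneg: "k \<ge> 1 \<Longrightarrow> 0 \<le> wt k b" unfolding wt_def by simp

lemma gs_nonneg: assumes "valid_alg alg" "k \<ge> 1" shows "0 \<le> gs alg k L K t c"
proof -
  have a: "0 \<le> alg h" "alg h \<le> 1" for h using assms(1) unfolding valid_alg_def by auto
  show ?thesis unfolding gs_def
    by (intro sum_nonneg mult_nonneg_nonneg prod_nonneg wt_nonneg[OF assms(2)]) (auto simp: a)
qed

lemma gs_good: assumes v: "valid_alg alg" shows "good (gs alg k L K) K"
  unfolding good_def
proof (intro conjI allI impI)
  fix c :: "nat \<Rightarrow> bool"
  have m: "(\<lambda>t. alg (hist t c (Suc m))) \<in> borel_measurable (PiM {..<K} (\<lambda>_. lborel))" if "m < K" for m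
    using v that unfolding valid_alg_def by auto
  show "(\<lambda>t. gs alg k L K t c) \<in> borel_measurable (PiM {..<K} (\<lambda>_. lborel))"
    unfolding gs_def
    by (intro borel_measurable_sum borel_measurable_times borel_measurable_const borel_measurable_prod
        borel_measurable_diff m) auto
next
  fix t t' :: "nat \<Rightarrow> real" and c :: "nat \<Rightarrow> bool"
  assume a: "\<forall>i<K. t i = t' i"
  have "hist t c (Suc m) = hist t' c (Suc m)" if "m < K" for m
    by (rule hist_local) (use a that in auto)
  then show "gs alg k L K t c = gs alg k L K t' c" unfolding gs_def
    by (intro sum.cong refl arg_cong2[where f="(*)"] prod.cong) auto
next
  fix t :: "nat \<Rightarrow> real" and c c' :: "nat \<Rightarrow> bool"
  assume a: "\<forall>i<K. c i = c' i"
  have "hist t c (Suc m) = hist t c' (Suc m)" if "m < K" for m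
    by (rule hist_local) (use a that in auto)
  then show "gs alg k L K t c = gs alg k L K t c'" unfolding gs_def
    using a by (intro sum.cong refl arg_cong2[where f="(*)"] prod.cong) auto
qed

lemma one_good: "good (\<lambda>_ _. 1) K" unfolding good_def by simp

lemma J_cong:
  assumes "\<And>x c. f (mg L T x) (mg L C c) = g (mg L T x) (mg L C c)"
  shows "J L n T C f = J L n T C g"
  unfolding J_def Integ_def using assms by simp

lemma J_affine:
  assumes g: "good g (L + n)" and nn: "\<And>t c. 0 \<le> g t c" and a: "0 \<le> \<alpha>" and b: "0 \<le> \<beta>"
  shows "J L n T C (\<lambda>t c. \<alpha> + \<beta> * g t c) = ennreal \<alpha> * J L n T C (\<lambda>_ _. 1) + ennreal \<beta> * J L n T C g"
proof -
  let ?K = "L + n"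
  let ?S = "{L..<?K} \<rightarrow>\<^sub>E (UNIV::bool set)"
  let ?P = "\<lambda>c. \<Prod>i\<in>{L..<?K}. rate (c i)"
  have Pn: "0 \<le> ?P c" for c by (intro prod_nonneg) (auto intro: less_imp_le rate_pos)
  have pt: "Integ L ?K T C (\<lambda>t c. \<alpha> + \<beta> * g t c) x = ennreal \<alpha> * Integ L ?K T C (\<lambda>_ _. 1) x + ennreal \<beta> * Integ L ?K T C g x" for x
  proof -
    have s1: "0 \<le> (\<Sum>c\<in>?S. ?P c * 1)" by (intro sum_nonneg mult_nonneg_nonneg Pn) auto
    have s2: "0 \<le> (\<Sum>c\<in>?S. ?P c * g (mg L T x) (mg L C c))" by (intro sum_nonneg mult_nonneg_nonneg Pn nn)
    have "(\<Sum>c\<in>?S. ?P c * (\<alpha> + \<beta> * g (mg L T x) (mg L C c))) = \<alpha> * (\<Sum>c\<in>?S. ?P c * 1) + \<beta> * (\<Sum>c\<in>?S. ?P c * g (mg L T x) (mg L C c))"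
      by (simp add: sum_distrib_left sum.distrib algebra_simps)
    then have "ennreal (\<Sum>c\<in>?S. ?P c * (\<alpha> + \<beta> * g (mg L T x) (mg L C c))) = ennreal \<alpha> * ennreal (\<Sum>c\<in>?S. ?P c * 1) + ennreal \<beta> * ennreal (\<Sum>c\<in>?S. ?P c * g (mg L T x) (mg L C c))"
      using s1 s2 a b by (simp add: ennreal_plus[symmetric] ennreal_mult[symmetric] mult_nonneg_nonneg del: ennreal_plus)
    then show ?thesis unfolding Integ_def by (simp add: distrib_left mult.left_commute)
  qed
  show ?thesis unfolding J_def pt
    by (subst nn_integral_add) (auto intro!: borel_measurable_times_ennreal Integ_meas g one_good simp: nn_integral_cmult Integ_meas g one_good)
qed


lemma nn_int_interval:
  fixes g :: "real \<Rightarrow> real"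
  assumes I: "(g has_integral I) {a..b}" and nn: "\<And>u. u \<in> {a<..<b} \<Longrightarrow> 0 \<le> g u"
  shows "(\<integral>\<^sup>+u. indicator {a<..<b} u * ennreal (g u) \<partial>lborel) = ennreal I"
proof -
  have "(g has_integral I) {a<..<b}" using I has_integral_open_interval[of g I a b] by simp
  from nn_integral_has_integral_lebesgue[OF nn this]
  show ?thesis by (simp add: indicator_mult_ennreal)
qed

lemma lb_range: "ordered_times L T \<Longrightarrow> 0 \<le> lb L T \<and> lb L T < 1"
  unfolding lb_def ordered_times_def by (cases L) auto

lemma sum_rate: "(\<Sum>b\<in>UNIV. ennreal (rate b) * ennreal x) = ennreal (Lam * x)" if "0 \<le> x"
proof -
  have "(\<Sum>b\<in>UNIV. ennreal (rate b) * ennreal x) = (\<Sum>b\<in>UNIV. ennreal (rate b * x))"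
    using that rate_pos by (simp add: ennreal_mult less_imp_le)
  also have "\<dots> = ennreal (\<Sum>b\<in>UNIV. rate b * x)"
    using that rate_pos by (intro sum_ennreal) (auto intro: mult_nonneg_nonneg less_imp_le)
  also have "(\<Sum>b\<in>UNIV. rate b * x) = Lam * x" unfolding Lam_def by (simp add: UNIV_bool algebra_simps)
  finally show ?thesis .
qed

lemma vol: "ordered_times L T \<Longrightarrow> J L n T C (\<lambda>_ _. 1) = ennreal (Lam ^ n * (1 - lb L T) ^ n / fact n)"
proof (induction n arbitrary: L T C)
  case 0
  then show ?case using J_zero[OF one_good] by simp
next
  case (Suc n)
  let ?a = "lb L T"
  have a: "0 \<le> ?a" "?a < 1" using lb_range[OF Suc.prems] by auto
  have "J L (Suc n) T C (\<lambda>_ _. 1) = (\<integral>\<^sup>+ u. (\<Sum>b\<in>UNIV. ennreal (rate b) * J (Suc L) n (T(L:=u)) (C(L:=b)) (\<lambda>_ _. 1)) \<partial>lborel)"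
    by (rule J_Suc[OF one_good]) simp
  also have "\<dots> = (\<integral>\<^sup>+ u. indicator {?a<..<1} u * ennreal (Lam * (Lam ^ n * (1 - u) ^ n / fact n)) \<partial>lborel)"
  proof (rule nn_integral_cong)
    fix u
    show "(\<Sum>b\<in>UNIV. ennreal (rate b) * J (Suc L) n (T(L:=u)) (C(L:=b)) (\<lambda>_ _. 1)) = indicator {?a<..<1} u * ennreal (Lam * (Lam ^ n * (1 - u) ^ n / fact n))"
    proof (cases "?a < u \<and> u < 1")
      case True
      then have o: "ordered_times (Suc L) (T(L:=u))" using ord_Suc Suc.prems by simp
      have "(\<Sum>b\<in>UNIV. ennreal (rate b) * J (Suc L) n (T(L:=u)) (C(L:=b)) (\<lambda>_ _. 1)) = (\<Sum>b\<in>UNIV. ennreal (rate b) * ennreal (Lam ^ n * (1 - u) ^ n / fact n))"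
      proof -
        have "J (Suc L) n (T(L:=u)) C' (\<lambda>_ _. 1) = ennreal (Lam ^ n * (1 - u) ^ n / fact n)" for C'
          using Suc.IH[OF o, of C'] unfolding lb_Suc .
        then show ?thesis by (simp only:)
      qed
      also have "\<dots> = ennreal (Lam * (Lam ^ n * (1 - u) ^ n / fact n))"
        using True Lam_pos by (intro sum_rate) auto
      finally show ?thesis using True by simp
    next
      case False
      then have o: "\<not> ordered_times (Suc L) (T(L:=u))" using ord_Suc by simp
      show ?thesis using False J_unord[OF o] by (simp add: indicator_def)
    qed
  qed
  also have "\<dots> = ennreal (Lam ^ Suc n * (1 - ?a) ^ Suc n / fact (Suc n))"
    by (rule nn_int_interval[OF vol_int]) (use a Lam_pos in auto)
  finally show ?case .
qed

lemma alg_bounds: "valid_alg alg \<Longrightarrow> 0 \<le> alg h \<and> alg h \<le> 1" unfolding valid_alg_def by auto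

lemma J_gs_Suc:
  assumes v: "valid_alg alg" and k: "k \<ge> 1"
  shows "J (Suc L) n (T(L:=u)) (C(L:=b)) (gs alg k L (L + Suc n)) =
    ennreal (wt k b * alg (hist (T(L:=u)) (C(L:=b)) (Suc L))) * J (Suc L) n (T(L:=u)) (C(L:=b)) (\<lambda>_ _. 1)
    + ennreal (1 - alg (hist (T(L:=u)) (C(L:=b)) (Suc L))) * J (Suc L) n (T(L:=u)) (C(L:=b)) (gs alg k (Suc L) (Suc L + n))"
proof -
  let ?p = "alg (hist (T(L:=u)) (C(L:=b)) (Suc L))"
  have "J (Suc L) n (T(L:=u)) (C(L:=b)) (gs alg k L (L + Suc n)) =
        J (Suc L) n (T(L:=u)) (C(L:=b)) (\<lambda>t c. wt k b * ?p + (1 - ?p) * gs alg k (Suc L) (Suc L + n) t c)"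
  proof (rule J_cong)
    fix x c
    have h: "hist (mg (Suc L) (T(L:=u)) x) (mg (Suc L) (C(L:=b)) c) (Suc L) = hist (T(L:=u)) (C(L:=b)) (Suc L)"
      by (rule hist_local) (simp add: mg_def)
    have cl: "mg (Suc L) (C(L:=b)) c L = b" by (simp add: mg_def)
    show "gs alg k L (L + Suc n) (mg (Suc L) (T(L:=u)) x) (mg (Suc L) (C(L:=b)) c) =
      wt k b * ?p + (1 - ?p) * gs alg k (Suc L) (Suc L + n) (mg (Suc L) (T(L:=u)) x) (mg (Suc L) (C(L:=b)) c)"
      using gs_rec[of L "L + Suc n" alg k] h cl by simp
  qed
  also have "\<dots> = ennreal (wt k b * ?p) * J (Suc L) n (T(L:=u)) (C(L:=b)) (\<lambda>_ _. 1)
    + ennreal (1 - ?p) * J (Suc L) n (T(L:=u)) (C(L:=b)) (gs alg k (Suc L) (Suc L + n))"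
    by (rule J_affine[OF gs_good[OF v] gs_nonneg[OF v k]])
       (use alg_bounds[OF v] wt_nonneg[OF k] in auto)
  finally show ?thesis .
qed


definition WN :: "online_alg \<Rightarrow> real \<Rightarrow> nat \<Rightarrow> nat \<Rightarrow> (nat \<Rightarrow> real) \<Rightarrow> (nat \<Rightarrow> bool) \<Rightarrow> ennreal" where
  "WN alg k N L T C = (\<Sum>n<N. ennreal (exp (- Lam * (1 - lb L T))) * J L n T C (gs alg k L (L + n)))"

definition MM :: "nat \<Rightarrow> nat \<Rightarrow> (nat \<Rightarrow> real) \<Rightarrow> (nat \<Rightarrow> bool) \<Rightarrow> ennreal" where
  "MM N L T C = (\<Sum>n<N. ennreal (exp (- Lam * (1 - lb L T))) * J L n T C (\<lambda>_ _. 1))"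

lemma MM_eq: assumes "ordered_times L T" shows "MM N L T C = ennreal (Mr N (lb L T))"
proof -
  have a: "lb L T \<le> 1" using lb_range[OF assms] by simp
  have "MM N L T C = (\<Sum>n<N. ennreal (exp (- Lam * (1 - lb L T)) * (Lam ^ n * (1 - lb L T) ^ n / fact n)))"
    unfolding MM_def vol[OF assms] by (intro sum.cong refl) (subst ennreal_mult'[symmetric], simp_all)
  also have "\<dots> = ennreal (Mr N (lb L T))" unfolding Mr_def
    using a Lam_pos by (intro sum_ennreal) auto
  finally show ?thesis .
qed

lemma MM_unord: "\<not> ordered_times L T \<Longrightarrow> MM N L T C = 0" unfolding MM_def by (simp add: J_unord)
lemma WN_unord: "\<not> ordered_times L T \<Longrightarrow> WN alg k N L T C = 0" unfolding WN_def by (simp add: J_unord)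

lemma exp_split: "ennreal (exp (- Lam * (1 - a))) = ennreal (exp (- Lam * (u - a))) * ennreal (exp (- Lam * (1 - u)))"
  by (simp add: ennreal_mult[symmetric] mult_exp_exp algebra_simps)

lemma J_meas_sum:
  assumes "good g (Suc L + n)"
  shows "(\<lambda>u. \<Sum>b\<in>UNIV. ennreal (rate b) * J (Suc L) n (T(L:=u)) (C(L:=b)) g) \<in> borel_measurable lborel"
  by (intro borel_measurable_sum borel_measurable_times_ennreal borel_measurable_const J_meas_u assms)

lemma WN_rec:
  assumes v: "valid_alg alg" and k: "k \<ge> 1"
  shows "WN alg k (Suc N) L T C = (\<integral>\<^sup>+ u. (\<Sum>b\<in>UNIV. ennreal (rate b) * ennreal (exp (- Lam * (u - lb L T))) *
     (ennreal (wt k b * alg (hist (T(L:=u)) (C(L:=b)) (Suc L))) * MM N (Suc L) (T(L:=u)) (C(L:=b))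
      + ennreal (1 - alg (hist (T(L:=u)) (C(L:=b)) (Suc L))) * WN alg k N (Suc L) (T(L:=u)) (C(L:=b)))) \<partial>lborel)"
proof -
  let ?e = "ennreal (exp (- Lam * (1 - lb L T)))"
  let ?F = "\<lambda>n u. \<Sum>b\<in>UNIV. ennreal (rate b) * J (Suc L) n (T(L:=u)) (C(L:=b)) (gs alg k L (L + Suc n))"
  have g1: "good (gs alg k L (L + Suc n)) (L + Suc n)" for n by (rule gs_good[OF v])
  have g2: "good (gs alg k L (L + Suc n)) (Suc L + n)" for n using g1[of n] by simp
  have J0: "J L 0 T C (gs alg k L (L + 0)) = 0"
    using J_zero[of "gs alg k L L" L T C] gs_good[OF v, of k L L] by (simp add: gs_empty)
  have "WN alg k (Suc N) L T C = (\<Sum>n<N. ?e * J L (Suc n) T C (gs alg k L (L + Suc n)))"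
    unfolding WN_def sum.lessThan_Suc_shift J0 by simp
  also have "\<dots> = (\<Sum>n<N. ?e * (\<integral>\<^sup>+ u. ?F n u \<partial>lborel))"
    by (intro sum.cong refl arg_cong2[where f="(*)"] J_Suc g1 gs_nonneg v k)
  also have "\<dots> = (\<Sum>n<N. (\<integral>\<^sup>+ u. ?e * ?F n u \<partial>lborel))"
    by (intro sum.cong refl nn_integral_cmult[symmetric] J_meas_sum g2)
  also have "\<dots> = (\<integral>\<^sup>+ u. (\<Sum>n<N. ?e * ?F n u) \<partial>lborel)"
    by (rule nn_integral_sum[symmetric]) (intro borel_measurable_times_ennreal borel_measurable_const J_meas_sum g2)
  also have "\<dots> = (\<integral>\<^sup>+ u. (\<Sum>b\<in>UNIV. ennreal (rate b) * ennreal (exp (- Lam * (u - lb L T))) *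
     (ennreal (wt k b * alg (hist (T(L:=u)) (C(L:=b)) (Suc L))) * MM N (Suc L) (T(L:=u)) (C(L:=b))
      + ennreal (1 - alg (hist (T(L:=u)) (C(L:=b)) (Suc L))) * WN alg k N (Suc L) (T(L:=u)) (C(L:=b)))) \<partial>lborel)"
  proof (rule nn_integral_cong)
    fix u
    let ?y = "ennreal (exp (- Lam * (u - lb L T)))"
    let ?z = "ennreal (exp (- Lam * (1 - u)))"
    let ?A = "\<lambda>b. ennreal (wt k b * alg (hist (T(L:=u)) (C(L:=b)) (Suc L)))"
    let ?B = "\<lambda>b. ennreal (1 - alg (hist (T(L:=u)) (C(L:=b)) (Suc L)))"
    let ?J1 = "\<lambda>n b. J (Suc L) n (T(L:=u)) (C(L:=b)) (\<lambda>_ _. 1)"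
    let ?Jg = "\<lambda>n b. J (Suc L) n (T(L:=u)) (C(L:=b)) (gs alg k (Suc L) (Suc L + n))"
    have F: "?F n u = (\<Sum>b\<in>UNIV. ennreal (rate b) * (?A b * ?J1 n b + ?B b * ?Jg n b))" for n
      by (simp only: J_gs_Suc[OF v k])
    have M: "MM N (Suc L) (T(L:=u)) (C(L:=b)) = (\<Sum>n<N. ?z * ?J1 n b)" for b unfolding MM_def lb_Suc ..
    have W: "WN alg k N (Suc L) (T(L:=u)) (C(L:=b)) = (\<Sum>n<N. ?z * ?Jg n b)" for b unfolding WN_def lb_Suc ..
    have "(\<Sum>n<N. ?e * ?F n u) = (\<Sum>n<N. \<Sum>b\<in>UNIV. ennreal (rate b) * ?y * (?A b * (?z * ?J1 n b) + ?B b * (?z * ?Jg n b)))"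
      unfolding F exp_split[of "lb L T" u] sum_distrib_left
      by (intro sum.cong refl) (simp add: algebra_simps)
    also have "\<dots> = (\<Sum>b\<in>UNIV. \<Sum>n<N. ennreal (rate b) * ?y * (?A b * (?z * ?J1 n b) + ?B b * (?z * ?Jg n b)))"
      by (rule sum.swap)
    also have "\<dots> = (\<Sum>b\<in>UNIV. ennreal (rate b) * ?y * (?A b * MM N (Suc L) (T(L:=u)) (C(L:=b)) + ?B b * WN alg k N (Suc L) (T(L:=u)) (C(L:=b))))"
      unfolding M W by (simp only: sum_distrib_left sum.distrib distrib_left)
    finally show "(\<Sum>n<N. ?e * ?F n u) = (\<Sum>b\<in>UNIV. ennreal (rate b) * ?y * (?A b * MM N (Suc L) (T(L:=u)) (C(L:=b)) + ?B b * WN alg k N (Suc L) (T(L:=u)) (C(L:=b))))" .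
  qed
  finally show ?thesis .
qed


lemma MM_rec:
  "MM (Suc N) L T C = ennreal (exp (- Lam * (1 - lb L T))) * (if ordered_times L T then 1 else 0) +
     (\<integral>\<^sup>+ u. (\<Sum>b\<in>UNIV. ennreal (rate b) * ennreal (exp (- Lam * (u - lb L T))) * MM N (Suc L) (T(L:=u)) (C(L:=b))) \<partial>lborel)"
proof -
  let ?e = "ennreal (exp (- Lam * (1 - lb L T)))"
  let ?F = "\<lambda>n u. \<Sum>b\<in>UNIV. ennreal (rate b) * J (Suc L) n (T(L:=u)) (C(L:=b)) (\<lambda>_ _. 1)"
  have J0: "J L 0 T C (\<lambda>_ _. 1) = (if ordered_times L T then 1 else 0)"
    using J_zero[OF one_good, of L T C] by simp
  have "MM (Suc N) L T C = ?e * (if ordered_times L T then 1 else 0) + (\<Sum>n<N. ?e * J L (Suc n) T C (\<lambda>_ _. 1))"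
    unfolding MM_def sum.lessThan_Suc_shift J0 by simp
  also have "(\<Sum>n<N. ?e * J L (Suc n) T C (\<lambda>_ _. 1)) = (\<Sum>n<N. ?e * (\<integral>\<^sup>+ u. ?F n u \<partial>lborel))"
    by (intro sum.cong refl arg_cong2[where f="(*)"] J_Suc one_good) simp
  also have "\<dots> = (\<Sum>n<N. (\<integral>\<^sup>+ u. ?e * ?F n u \<partial>lborel))"
    by (intro sum.cong refl nn_integral_cmult[symmetric] J_meas_sum one_good)
  also have "\<dots> = (\<integral>\<^sup>+ u. (\<Sum>n<N. ?e * ?F n u) \<partial>lborel)"
    by (rule nn_integral_sum[symmetric]) (intro borel_measurable_times_ennreal borel_measurable_const J_meas_sum one_good)
  also have "\<dots> = (\<integral>\<^sup>+ u. (\<Sum>b\<in>UNIV. ennreal (rate b) * ennreal (exp (- Lam * (u - lb L T))) * MM N (Suc L) (T(L:=u)) (C(L:=b))) \<partial>lborel)"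
  proof (rule nn_integral_cong)
    fix u
    let ?y = "ennreal (exp (- Lam * (u - lb L T)))"
    let ?z = "ennreal (exp (- Lam * (1 - u)))"
    let ?J1 = "\<lambda>n b. J (Suc L) n (T(L:=u)) (C(L:=b)) (\<lambda>_ _. 1)"
    have M: "MM N (Suc L) (T(L:=u)) (C(L:=b)) = (\<Sum>n<N. ?z * ?J1 n b)" for b unfolding MM_def lb_Suc ..
    have "(\<Sum>n<N. ?e * ?F n u) = (\<Sum>n<N. \<Sum>b\<in>UNIV. ennreal (rate b) * ?y * (?z * ?J1 n b))"
      unfolding exp_split[of "lb L T" u] sum_distrib_left
      by (intro sum.cong refl) (simp add: algebra_simps)
    also have "\<dots> = (\<Sum>b\<in>UNIV. \<Sum>n<N. ennreal (rate b) * ?y * (?z * ?J1 n b))"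
      by (rule sum.swap)
    also have "\<dots> = (\<Sum>b\<in>UNIV. ennreal (rate b) * ?y * MM N (Suc L) (T(L:=u)) (C(L:=b)))"
      unfolding M by (simp only: sum_distrib_left)
    finally show "(\<Sum>n<N. ?e * ?F n u) = (\<Sum>b\<in>UNIV. ennreal (rate b) * ?y * MM N (Suc L) (T(L:=u)) (C(L:=b)))" .
  qed
  finally show ?thesis .
qed

lemma MM_meas_u: "(\<lambda>u. MM N (Suc L) (T(L:=u)) C') \<in> borel_measurable lborel"
  unfolding MM_def lb_Suc
  by (intro borel_measurable_sum borel_measurable_times_ennreal J_meas_u one_good) measurable

lemma WN_meas_u: "valid_alg alg \<Longrightarrow> (\<lambda>u. WN alg k N (Suc L) (T(L:=u)) C') \<in> borel_measurable lborel"
  unfolding WN_def lb_Suc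
  by (intro borel_measurable_sum borel_measurable_times_ennreal J_meas_u gs_good) measurable

lemma V_meas: "V k \<in> borel_measurable lborel"
  unfolding V_def[abs_def] Bf_def Aacc_def by measurable

lemma Hf_meas: "Hf k \<in> borel_measurable lborel"
  unfolding Hf_def[abs_def] using V_meas by measurable

lemma Hf_nonneg: "k \<ge> 1 \<Longrightarrow> 0 \<le> Hf k u"
  unfolding Hf_def using rate_pos wt_nonneg
  by (intro sum_nonneg mult_nonneg_nonneg) (auto intro: less_imp_le max.coboundedI1)

lemma Hf_sum: "ennreal (y * Hf k u) = (\<Sum>b\<in>UNIV. ennreal (rate b) * ennreal y * ennreal (max (wt k b) (V k u)))"
  if "0 \<le> y" "k \<ge> 1"
proof -
  have m: "0 \<le> max (wt k b) (V k u)" for b using wt_nonneg[OF that(2)] by (simp add: max.coboundedI1)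
  have "(\<Sum>b\<in>UNIV. ennreal (rate b) * ennreal y * ennreal (max (wt k b) (V k u))) = (\<Sum>b\<in>UNIV. ennreal (rate b * y * max (wt k b) (V k u)))"
    using that m rate_pos by (simp add: ennreal_mult less_imp_le)
  also have "\<dots> = ennreal (\<Sum>b\<in>UNIV. rate b * y * max (wt k b) (V k u))"
    using that m by (intro sum_ennreal) (auto intro!: mult_nonneg_nonneg simp: less_imp_le[OF rate_pos])
  also have "(\<Sum>b\<in>UNIV. rate b * y * max (wt k b) (V k u)) = y * Hf k u"
    unfolding Hf_def by (simp add: sum_distrib_left algebra_simps)
  finally show ?thesis by simp
qed

lemma UB:
  assumes v: "valid_alg alg" and k: "k \<ge> 1"
  shows "ordered_times L T \<Longrightarrow> WN alg k N L T C \<le> ennreal (V k (lb L T))"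
proof (induction N arbitrary: L T C)
  case 0
  then show ?case unfolding WN_def by simp
next
  case (Suc N)
  let ?a = "lb L T"
  have a: "0 \<le> ?a" "?a < 1" using lb_range[OF Suc.prems] by auto
  let ?p = "\<lambda>u b. alg (hist (T(L:=u)) (C(L:=b)) (Suc L))"
  have "WN alg k (Suc N) L T C = (\<integral>\<^sup>+ u. (\<Sum>b\<in>UNIV. ennreal (rate b) * ennreal (exp (- Lam * (u - ?a))) *
     (ennreal (wt k b * ?p u b) * MM N (Suc L) (T(L:=u)) (C(L:=b))
      + ennreal (1 - ?p u b) * WN alg k N (Suc L) (T(L:=u)) (C(L:=b)))) \<partial>lborel)"
    by (rule WN_rec[OF v k])
  also have "\<dots> \<le> (\<integral>\<^sup>+ u. indicator {?a<..<1} u * ennreal (exp (- Lam * (u - ?a)) * Hf k u) \<partial>lborel)"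
  proof (rule nn_integral_mono)
    fix u
    show "(\<Sum>b\<in>UNIV. ennreal (rate b) * ennreal (exp (- Lam * (u - ?a))) *
     (ennreal (wt k b * ?p u b) * MM N (Suc L) (T(L:=u)) (C(L:=b))
      + ennreal (1 - ?p u b) * WN alg k N (Suc L) (T(L:=u)) (C(L:=b)))) \<le> indicator {?a<..<1} u * ennreal (exp (- Lam * (u - ?a)) * Hf k u)"
    proof (cases "?a < u \<and> u < 1")
      case True
      then have o: "ordered_times (Suc L) (T(L:=u))" using ord_Suc Suc.prems by simp
      have u01: "0 \<le> u" "u \<le> 1" using True a by auto
      have bnd: "ennreal (wt k b * ?p u b) * MM N (Suc L) (T(L:=u)) (C(L:=b))
          + ennreal (1 - ?p u b) * WN alg k N (Suc L) (T(L:=u)) (C(L:=b)) \<le> ennreal (max (wt k b) (V k u))" for b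
      proof -
        have p: "0 \<le> ?p u b" "?p u b \<le> 1" using alg_bounds[OF v] by auto
        have w: "0 \<le> wt k b" using wt_nonneg[OF k] .
        have Vn: "0 \<le> V k u" using V_bounds[OF k u01] by simp
        have M1: "MM N (Suc L) (T(L:=u)) (C(L:=b)) \<le> 1"
          unfolding MM_eq[OF o] lb_Suc using Mr_le1[OF u01(2)] by simp
        have W1: "WN alg k N (Suc L) (T(L:=u)) (C(L:=b)) \<le> ennreal (V k u)"
          using Suc.IH[OF o] unfolding lb_Suc .
        have "ennreal (wt k b * ?p u b) * MM N (Suc L) (T(L:=u)) (C(L:=b))
          + ennreal (1 - ?p u b) * WN alg k N (Suc L) (T(L:=u)) (C(L:=b)) \<le> ennreal (wt k b * ?p u b) * 1 + ennreal (1 - ?p u b) * ennreal (V k u)"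
          by (intro add_mono mult_left_mono M1 W1) auto
        also have "\<dots> = ennreal (wt k b * ?p u b + (1 - ?p u b) * V k u)"
          using p w Vn by (simp add: ennreal_mult[symmetric] ennreal_plus[symmetric] del: ennreal_plus)
        also have "\<dots> \<le> ennreal (max (wt k b) (V k u))"
        proof (rule ennreal_leI)
          have "wt k b * ?p u b + (1 - ?p u b) * V k u \<le> max (wt k b) (V k u) * ?p u b + (1 - ?p u b) * max (wt k b) (V k u)"
            using p by (intro add_mono mult_right_mono mult_left_mono) auto
          then show "wt k b * ?p u b + (1 - ?p u b) * V k u \<le> max (wt k b) (V k u)" by (simp add: algebra_simps)
        qed
        finally show ?thesis .
      qed
      have "(\<Sum>b\<in>UNIV. ennreal (rate b) * ennreal (exp (- Lam * (u - ?a))) *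
         (ennreal (wt k b * ?p u b) * MM N (Suc L) (T(L:=u)) (C(L:=b))
          + ennreal (1 - ?p u b) * WN alg k N (Suc L) (T(L:=u)) (C(L:=b))))
        \<le> (\<Sum>b\<in>UNIV. ennreal (rate b) * ennreal (exp (- Lam * (u - ?a))) * ennreal (max (wt k b) (V k u)))"
        by (intro sum_mono mult_left_mono bnd) auto
      also have "\<dots> = ennreal (exp (- Lam * (u - ?a)) * Hf k u)"
        by (rule Hf_sum[symmetric]) (use k in auto)
      finally show ?thesis using True by simp
    next
      case False
      then have o: "\<not> ordered_times (Suc L) (T(L:=u))" using ord_Suc by simp
      show ?thesis using MM_unord[OF o] WN_unord[OF o] by simp
    qed
  qed
  also have "\<dots> = ennreal (V k ?a)"
    by (rule nn_int_interval[OF V_int[OF k a(1)]]) (use a Hf_nonneg[OF k] in auto)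
  finally show ?case .
qed


lemma alg1_hist: "alg1 t1 (hist T C (Suc m)) = (if C m \<or> t1 < T m then 1 else 0)"
  unfolding alg1_def last_hist by simp

lemma alg1_valid: "valid_alg (alg1 t1)"
  unfolding valid_alg_def
proof (intro conjI allI impI)
  fix h :: "(real \<times> bool) list"
  show "0 \<le> alg1 t1 h" "alg1 t1 h \<le> 1" unfolding alg1_def by (auto split: prod.splits)
next
  fix n m :: nat and c :: "nat \<Rightarrow> bool"
  assume mn: "m \<le> n"
  show "(\<lambda>t. alg1 t1 (hist t c m)) \<in> borel_measurable (PiM {..<n} (\<lambda>_. lborel))"
  proof (cases m)
    case 0
    then show ?thesis by (simp add: hist_def)
  next
    case (Suc m')
    then have [measurable]: "(\<lambda>t. t m') \<in> borel_measurable (PiM {..<n} (\<lambda>_. lborel))" using mn by simp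
    have "(\<lambda>t::nat\<Rightarrow>real. if c m' \<or> t1 < t m' then 1 else 0 :: real) \<in> borel_measurable (PiM {..<n} (\<lambda>_. lborel))"
      by measurable
    then show ?thesis unfolding Suc alg1_hist .
  qed
qed

lemma greedy:
  assumes k: "k \<ge> 1" and u: "0 < u" "u \<le> 1"
  shows "max (wt k b) (V k u) = wt k b * (if b \<or> tt k < u then 1 else 0) + (1 - (if b \<or> tt k < u then 1 else 0)) * V k u"
proof -
  have Vb: "V k u \<le> k" using V_bounds[OF k] u by simp
  show ?thesis
  proof (cases b)
    case True then show ?thesis using Vb unfolding wt_def by simp
  next
    case False
    show ?thesis
    proof (cases "tt k < u")
      case True then show ?thesis using False V_ge[OF k, of u] u unfolding wt_def by simp
    next
      case nt: False
      show ?thesis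
      proof (cases "u < tt k")
        case True then show ?thesis using False nt V_lt[OF k, of u] unfolding wt_def by simp
      next
        case ge: False
        then have ut: "u = tt k" using nt by simp
        then have tp: "tt k > 0" using u by simp
        have "V k u = 1" unfolding V_def ut using tt_pos_facts(4)[OF k tp] by simp
        then show ?thesis using False nt unfolding wt_def by simp
      qed
    qed
  qed
qed

lemma LB:
  assumes k: "k \<ge> 1"
  shows "ordered_times L T \<Longrightarrow> ennreal (V k (lb L T)) + ennreal k * MM N L T C \<le> WN (alg1 (tt k)) k N L T C + ennreal k"
proof (induction N arbitrary: L T C)
  case 0
  have "V k (lb L T) \<le> k" using V_bounds[OF k] lb_range[OF 0] by auto
  then show ?case unfolding MM_def WN_def by (simp add: ennreal_leI)
next
  case (Suc N)
  let ?alg = "alg1 (tt k)"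
  have v: "valid_alg ?alg" by (rule alg1_valid)
  let ?a = "lb L T"
  have a: "0 \<le> ?a" "?a < 1" using lb_range[OF Suc.prems] by auto
  define ea where "ea = exp (- Lam * (1 - ?a))"
  have ea: "0 \<le> ea" "ea \<le> 1" unfolding ea_def using a Lam_pos by (auto simp: mult_nonneg_nonneg)
  define y where "y u = exp (- Lam * (u - ?a))" for u
  define P where "P u b = (if b \<or> tt k < u then 1 else 0 :: real)" for u b
  have pe: "?alg (hist (T(L:=u)) (C(L:=b)) (Suc L)) = P u b" for u b unfolding alg1_hist P_def by simp
  define MM' where "MM' u b = MM N (Suc L) (T(L:=u)) (C(L:=b))" for u b
  define WN' where "WN' u b = WN ?alg k N (Suc L) (T(L:=u)) (C(L:=b))" for u b
  define X1 where "X1 u = indicator {?a<..<1} u * ennreal (y u * Hf k u)" for u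
  define X2 where "X2 u = ennreal k * (\<Sum>b\<in>UNIV. ennreal (rate b) * ennreal (y u) * MM' u b)" for u
  define Y1 where "Y1 u = (\<Sum>b\<in>UNIV. ennreal (rate b) * ennreal (y u) * (ennreal (wt k b * P u b) * MM' u b + ennreal (1 - P u b) * WN' u b))" for u
  define Y2 where "Y2 u = indicator {?a<..<1} u * ennreal (Lam * y u * k)" for u
  have mM: "(\<lambda>u. MM' u b) \<in> borel_measurable lborel" for b unfolding MM'_def by (rule MM_meas_u)
  have mW: "(\<lambda>u. WN' u b) \<in> borel_measurable lborel" for b unfolding WN'_def by (rule WN_meas_u[OF v])
  have my: "(\<lambda>u. ennreal (y u)) \<in> borel_measurable lborel" unfolding y_def by measurable
  have mP: "(\<lambda>u. P u b) \<in> borel_measurable lborel" for b unfolding P_def by measurable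
  have mX1: "X1 \<in> borel_measurable lborel" unfolding X1_def[abs_def] y_def using Hf_meas[of k] by measurable
  have mX2: "X2 \<in> borel_measurable lborel" unfolding X2_def[abs_def] using mM my by measurable
  have mY1: "Y1 \<in> borel_measurable lborel" unfolding Y1_def[abs_def] using mM mW my mP by measurable
  have mY2: "Y2 \<in> borel_measurable lborel" unfolding Y2_def[abs_def] y_def by measurable
  have eV: "ennreal (V k ?a) = integral\<^sup>N lborel X1"
    unfolding X1_def y_def by (rule nn_int_interval[OF V_int[OF k a(1)], symmetric]) (use a Hf_nonneg[OF k] in auto)
  have eM: "ennreal k * MM (Suc N) L T C = ennreal (k * ea) + integral\<^sup>N lborel X2"
  proof -
    have "MM (Suc N) L T C = ennreal ea + (\<integral>\<^sup>+ u. (\<Sum>b\<in>UNIV. ennreal (rate b) * ennreal (y u) * MM' u b) \<partial>lborel)"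
      using MM_rec[of N L T C] Suc.prems unfolding ea_def y_def MM'_def by simp
    moreover have "ennreal k * (\<integral>\<^sup>+ u. (\<Sum>b\<in>UNIV. ennreal (rate b) * ennreal (y u) * MM' u b) \<partial>lborel) = integral\<^sup>N lborel X2"
      unfolding X2_def using mM my by (subst nn_integral_cmult) (auto intro!: borel_measurable_sum borel_measurable_times_ennreal)
    ultimately show ?thesis using k ea by (simp add: distrib_left ennreal_mult)
  qed
  have eW: "WN ?alg k (Suc N) L T C = integral\<^sup>N lborel Y1"
    using WN_rec[OF v k, of N L T C] unfolding Y1_def y_def MM'_def WN'_def pe by simp
  have eK: "ennreal k = ennreal (k * ea) + integral\<^sup>N lborel Y2"
  proof -
    have "integral\<^sup>N lborel Y2 = ennreal (k * (1 - ea))"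
      unfolding Y2_def y_def ea_def
      by (rule nn_int_interval[OF k_int]) (use a Lam_pos k in auto)
    then show ?thesis using ea k by (simp add: ennreal_plus[symmetric] algebra_simps del: ennreal_plus)
  qed
  have pw: "X1 u + X2 u \<le> Y1 u + Y2 u" for u
  proof (cases "?a < u \<and> u < 1")
    case True
    then have o: "ordered_times (Suc L) (T(L:=u))" using ord_Suc Suc.prems by simp
    have u01: "0 < u" "u \<le> 1" using True a by auto
    have yn: "0 \<le> y u" unfolding y_def by simp
    have Mm: "MM' u b = ennreal (Mr N u)" for b unfolding MM'_def MM_eq[OF o] lb_Suc ..
    have m01: "0 \<le> Mr N u" "Mr N u \<le> 1" using Mr_nonneg[of u N] Mr_le1[of u N] u01 by auto
    have IH: "ennreal (V k u) + ennreal k * MM' u b \<le> WN' u b + ennreal k" for b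
      using Suc.IH[OF o, of "C(L:=b)"] unfolding lb_Suc MM'_def WN'_def .
    have per: "ennreal (max (wt k b) (V k u)) + ennreal k * MM' u b \<le> ennreal (wt k b * P u b) * MM' u b + ennreal (1 - P u b) * WN' u b + ennreal k" for b
    proof (cases "b \<or> tt k < u")
      case True
      then have P1: "P u b = 1" unfolding P_def by simp
      have mx: "max (wt k b) (V k u) = wt k b" using greedy[OF k u01, of b] True by simp
      have w: "0 \<le> wt k b" "wt k b \<le> k" using k unfolding wt_def by auto
      have "wt k b + k * Mr N u \<le> wt k b * Mr N u + k"
      proof -
        have "0 \<le> (k - wt k b) * (1 - Mr N u)" using w m01 by (intro mult_nonneg_nonneg) auto
        then show ?thesis by (simp add: algebra_simps)
      qed
      then have "ennreal (wt k b + k * Mr N u) \<le> ennreal (wt k b * Mr N u + k)" by (rule ennreal_leI)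
      then show ?thesis unfolding mx P1 Mm using w m01 k
        by (simp add: ennreal_mult[symmetric] ennreal_plus[symmetric] del: ennreal_plus)
    next
      case False
      then have P0: "P u b = 0" unfolding P_def by simp
      have mx: "max (wt k b) (V k u) = V k u" using greedy[OF k u01, of b] False by simp
      show ?thesis unfolding mx P0 using IH[of b] by simp
    qed
    have X1e: "X1 u = (\<Sum>b\<in>UNIV. ennreal (rate b) * ennreal (y u) * ennreal (max (wt k b) (V k u)))"
      unfolding X1_def using True Hf_sum[OF yn k] by simp
    have X2e: "X2 u = (\<Sum>b\<in>UNIV. ennreal (rate b) * ennreal (y u) * (ennreal k * MM' u b))"
      unfolding X2_def sum_distrib_left by (simp add: algebra_simps)
    have Y2e: "Y2 u = (\<Sum>b\<in>UNIV. ennreal (rate b) * ennreal (y u) * ennreal k)"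
    proof -
      have "Y2 u = ennreal (Lam * (y u * k))" unfolding Y2_def using True by (simp add: algebra_simps)
      also have "\<dots> = (\<Sum>b\<in>UNIV. ennreal (rate b) * ennreal (y u * k))"
        by (rule sum_rate[symmetric]) (use yn k in auto)
      moreover have "ennreal (y u * k) = ennreal (y u) * ennreal k" using yn k by (simp add: ennreal_mult)
      ultimately show ?thesis by (simp add: mult.assoc)
    qed
    have "X1 u + X2 u = (\<Sum>b\<in>UNIV. ennreal (rate b) * ennreal (y u) * (ennreal (max (wt k b) (V k u)) + ennreal k * MM' u b))"
      unfolding X1e X2e by (simp add: sum.distrib distrib_left)
    also have "\<dots> \<le> (\<Sum>b\<in>UNIV. ennreal (rate b) * ennreal (y u) * (ennreal (wt k b * P u b) * MM' u b + ennreal (1 - P u b) * WN' u b + ennreal k))"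
      by (intro sum_mono mult_left_mono per) auto
    also have "\<dots> = Y1 u + Y2 u"
      unfolding Y1_def Y2e by (simp add: sum.distrib distrib_left)
    finally show ?thesis .
  next
    case False
    then have o: "\<not> ordered_times (Suc L) (T(L:=u))" using ord_Suc by simp
    have "X1 u = 0" unfolding X1_def using False by simp
    moreover have "X2 u = 0" unfolding X2_def MM'_def using MM_unord[OF o] by simp
    ultimately show ?thesis by simp
  qed
  have "ennreal (V k ?a) + ennreal k * MM (Suc N) L T C = ennreal (k * ea) + (integral\<^sup>N lborel X1 + integral\<^sup>N lborel X2)"
    unfolding eV eM by (simp add: algebra_simps)
  also have "\<dots> = ennreal (k * ea) + (\<integral>\<^sup>+ u. X1 u + X2 u \<partial>lborel)"
    by (simp add: nn_integral_add[OF mX1 mX2])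
  also have "\<dots> \<le> ennreal (k * ea) + (\<integral>\<^sup>+ u. Y1 u + Y2 u \<partial>lborel)"
    by (intro add_left_mono nn_integral_mono pw)
  also have "\<dots> = ennreal (k * ea) + (integral\<^sup>N lborel Y1 + integral\<^sup>N lborel Y2)"
    by (simp add: nn_integral_add[OF mY1 mY2])
  also have "\<dots> = WN ?alg k (Suc N) L T C + ennreal k"
  proof -
    have "WN ?alg k (Suc N) L T C + ennreal k = integral\<^sup>N lborel Y1 + (ennreal (k * ea) + integral\<^sup>N lborel Y2)"
      unfolding eW by (subst eK) (rule refl)
    then show ?thesis by (simp only: ac_simps)
  qed
  finally show ?case .
qed


lemma mg0: "mg 0 T x = x" unfolding mg_def by simp

lemma EW_eq: "expected_weight k alg = (\<Sum>n. ennreal (exp (- Lam * (1 - lb 0 T0))) * J 0 n T0 C0 (gs alg k 0 (0 + n)))"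
proof -
  have "J 0 n T0 C0 (gs alg k 0 (0 + n)) = (\<integral>\<^sup>+ t. indicator {t. ordered_times n t} t *
            ennreal (\<Sum>c\<in>{..<n} \<rightarrow>\<^sub>E (UNIV :: bool set). (\<Prod>i<n. rate (c i)) * gain k alg t c n)
         \<partial>(PiM {..<n} (\<lambda>_. lborel)))" for n
    unfolding J_def Integ_def by (simp add: mg0 atLeast0LessThan gain_gs)
  moreover have "exp (- Lam * (1 - lb 0 T0)) = exp (- (rate True + rate False))" unfolding Lam_def lb_def by simp
  ultimately show ?thesis unfolding expected_weight_def by simp
qed

lemma EW_SUP: "expected_weight k alg = (SUP N. WN alg k N 0 T0 C0)"
  unfolding EW_eq[of k alg T0 C0] WN_def by (rule suminf_eq_SUP)

theorem lemma3p2: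
  fixes k :: real
  assumes "k \<ge> 1"
  shows "\<exists>t1\<in>{0..1}. valid_alg (alg1 t1) \<and>
           (\<forall>alg. valid_alg alg \<longrightarrow> expected_weight k alg \<le> expected_weight k (alg1 t1))"
proof -
  note k = assms
  define T0 :: "nat \<Rightarrow> real" where "T0 = (\<lambda>_. 0)"
  define C0 :: "nat \<Rightarrow> bool" where "C0 = (\<lambda>_. False)"
  have o0: "ordered_times 0 T0" unfolding ordered_times_def by simp
  have lb0: "lb 0 T0 = 0" unfolding lb_def by simp
  define V0 where "V0 = V k 0"
  have ub: "expected_weight k alg \<le> ennreal V0" if "valid_alg alg" for alg
    unfolding EW_SUP[of k alg T0 C0] V0_def
    using UB[OF that k o0] lb0 by (auto intro!: SUP_least)
  let ?alg = "alg1 (tt k)"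
  define E1 where "E1 = expected_weight k ?alg"
  have E1ub: "E1 \<le> ennreal V0" unfolding E1_def by (rule ub[OF alg1_valid])
  then have "E1 < top" by (simp add: le_less_trans)
  define e1 where "e1 = enn2real E1"
  have E1e: "E1 = ennreal e1" unfolding e1_def using \<open>E1 < top\<close> by (simp add: ennreal_enn2real)
  have e10: "0 \<le> e1" unfolding e1_def by simp
  have lbN: "V0 + k * Mr N 0 \<le> e1 + k" for N
  proof -
    have "ennreal V0 + ennreal k * MM N 0 T0 C0 \<le> WN ?alg k N 0 T0 C0 + ennreal k"
      using LB[OF k o0] lb0 unfolding V0_def by simp
    also have "WN ?alg k N 0 T0 C0 \<le> E1" unfolding E1_def EW_SUP[of k ?alg T0 C0] by (rule SUP_upper) simp
    finally have "ennreal V0 + ennreal k * ennreal (Mr N 0) \<le> ennreal e1 + ennreal k"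
      unfolding MM_eq[OF o0] lb0 E1e by (simp add: add_right_mono)
    moreover have "0 \<le> V0" unfolding V0_def using V_bounds[OF k, of 0] by simp
    moreover have "0 \<le> Mr N 0" using Mr_nonneg[of 0 N] by simp
    ultimately have "ennreal (V0 + k * Mr N 0) \<le> ennreal (e1 + k)"
      using k e10 by (simp add: ennreal_mult[symmetric] ennreal_plus[symmetric] del: ennreal_plus)
    moreover have h: "0 \<le> e1 + k" using k e10 by simp
    ultimately show ?thesis using ennreal_le_iff[OF h] by blast
  qed
  have "(\<lambda>N. V0 + k * Mr N 0) \<longlonglongrightarrow> V0 + k * 1"
    by (intro tendsto_add tendsto_mult tendsto_const Mr_lim)
  then have "V0 + k * 1 \<le> e1 + k" using lbN by (intro LIMSEQ_le_const2) auto
  then have "V0 \<le> e1" by simp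
  then have "ennreal V0 \<le> E1" unfolding E1e by (simp add: ennreal_leI)
  show ?thesis
  proof (intro bexI conjI allI impI)
    show "valid_alg ?alg" by (rule alg1_valid)
    show "tt k \<in> {0..1}" using tt_range[OF k] by simp
    fix alg assume "valid_alg alg"
    then show "expected_weight k alg \<le> expected_weight k ?alg"
      using ub \<open>ennreal V0 \<le> E1\<close> unfolding E1_def by (meson order_trans)
  qed
qed


end
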